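(* Let $(i,k)\in\mathcal I_1$. Then $F_{\le(i,k)}F_{st}=0$ for every $(s,t)\in\mathcal I_1$ with $(s,t)\preceq(i,k)$; equivalently, $F_{<(i,k)}F_{st}=0$ for every $(s,t)\in\mathcal I_1$ with $(s,t)\prec(i,k)$.
   Context: Let $m,n\ge 1$, let $q$ be an indeterminate, and let indices range over $[1,m+n]$. Put $q_i=q$ if $i\le m$ and $q_i=q^{-1}$ if $i>m$. Let $\mathcal I_0=\{(i,j):1\le i<j\le m \text{ or } m+1\le i<j\le m+n\}$, $\mathcal I_1=\{(i,j):1\le i\le m<j\le m+n\}$. The quantum supergroup $U_q=U_q(\mathfrak{gl}(m|n))$ is the associative $\mathbb C(q)$-superalgebra generated by $K_j^{\pm1}$ ($j\in[1,m+n]$) and $E_{i,i+1},F_{i,i+1}$ ($1\le i<m+n$), where $K_j^{\pm1}$ and $E_{i,i+1},F_{i,i+1}$ for $i\ne m$ are even and $E_{m,m+1},F_{m,m+1}$ are odd, subject to: $K_iK_j=K_jK_i$, $K_iK_i^{-1}=1$; $K_iE_{j,j+1}K_i^{-1}=q_i^{\delta_{ij}-\delta_{i,j+1}}E_{j,j+1}$, $K_iF_{j,j+1}K_i^{-1}=q_i^{-(\delta_{ij}-\delta_{i,j+1})}F_{j,j+1}$; $[E_{i,i+1},F_{j,j+1}]=\delta_{ij}\frac{K_iK_{i+1}^{-1}-K_i^{-1}K_{i+1}}{q_i-q_i^{-1}}$; $E_{m,m+1}^2=F_{m,m+1}^2=0$; $E_{i,i+1}E_{j,j+1}=E_{j,j+1}E_{i,i+1}$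 and $F_{i,i+1}F_{j,j+1}=F_{j,j+1}F_{i,i+1}$ for $|i-j|>1$; for $|i-j|=1$, $i\neq m$, and $X\in\{E,F\}$: $X_{i,i+1}^2X_{j,j+1}-(q+q^{-1})X_{i,i+1}X_{j,j+1}X_{i,i+1}+X_{j,j+1}X_{i,i+1}^2=0$; and $[E_{m-1,m+2},E_{m,m+1}]=[F_{m-1,m+2},F_{m,m+1}]=0$. Here for homogeneous $x,y$, $[x,y]=xy-(-1)^{\bar x\bar y}yx$. For $i<j$ with $j>i+1$, $E_{ij}=E_{ic}E_{cj}-q_c^{-1}E_{cj}E_{ic}$ and $F_{ij}=-q_cF_{ic}F_{cj}+F_{cj}F_{ic}$ for $i<c<j$ (independent of $c$); $E_{ij},F_{ij}$ are odd iff $(i,j)\in\mathcal I_1$. Order on $\mathcal I_1$: $(i,j)\prec(s,t)$ iff $j>t$, or $j=t$ and $i<s$. For $I\subseteq\mathcal I_1$, $F_I$ is the product of the $F_{ij}$, $(i,j)\in I$, taken in increasing $\prec$-order ($F_\emptyset=1$). For $(i,j)\in\mathcal I_1$, $F_{\ge(i,j)}$, $F_{>(i,j)}$, $F_{\le(i,j)}$, $F_{<(i,j)}$ denote $F_I$ for $I=\{(s,t)\in\mathcal I_1:(s,t)\succeq(i,j)\}$, $\{(s,t):(s,t)\succ(i,j)\}$, $\{(s,t):(s,t)\preceq(i,j)\}$, $\{(s,t):(s,t)\prec(i,j)\}$ respectively. *)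

theory Defs
  imports Complex_Main "HOL-Computational_Algebra.Polynomial" "HOL-Computational_Algebra.Fraction_Field"
begin

type_synonym Cq = "complex poly fract"

definition qv :: Cq where "qv = Fract [:0, 1:] 1"

definition qq :: "nat \<Rightarrow> nat \<Rightarrow> Cq" where
  "qq m i = (if i \<le> m then qv else inverse qv)"

definition delta :: "nat \<Rightarrow> nat \<Rightarrow> int" where
  "delta i j = (if i = j then 1 else 0)"

text \<open>Super bracket of homogeneous elements with parities px, py (True = odd).\<close>
definition sbr :: "bool \<Rightarrow> bool \<Rightarrow> 'a::ring_1 \<Rightarrow> 'a \<Rightarrow> 'a" where
  "sbr px py x y = (if px \<and> py then x * y + y * x else x * y - y * x)"

definition cq_algebra :: "(Cq \<Rightarrow> 'a::ring_1) \<Rightarrow> bool" where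
  "cq_algebra \<iota> \<longleftrightarrow> \<iota> 1 = 1 \<and> (\<forall>x y. \<iota> (x + y) = \<iota> x + \<iota> y) \<and>
     (\<forall>x y. \<iota> (x * y) = \<iota> x * \<iota> y) \<and> (\<forall>x a. \<iota> x * a = a * \<iota> x)"

text \<open>Generic E_{ij} for i<j (the paper's recursion with c = j-1):
  E_aux i d = E_{i,i+d}.  E i means E_{i,i+1}.\<close>
fun E_aux :: "(Cq \<Rightarrow> 'a::ring_1) \<Rightarrow> nat \<Rightarrow> (nat \<Rightarrow> 'a) \<Rightarrow> nat \<Rightarrow> nat \<Rightarrow> 'a" where
  "E_aux \<iota> m E i 0 = 1"
| "E_aux \<iota> m E i (Suc 0) = E i"
| "E_aux \<iota> m E i (Suc (Suc d)) =
     (let c = i + Suc d in E_aux \<iota> m E i (Suc d) * E c - \<iota> (inverse (qq m c)) * E c * E_aux \<iota> m E i (Suc d))"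

definition Eij :: "(Cq \<Rightarrow> 'a::ring_1) \<Rightarrow> nat \<Rightarrow> (nat \<Rightarrow> 'a) \<Rightarrow> nat \<Rightarrow> nat \<Rightarrow> 'a" where
  "Eij \<iota> m E i j = E_aux \<iota> m E i (j - i)"

text \<open>F_aux i d = F_{i,i+d}, via F_{ij} = -q_c F_{ic} F_{cj} + F_{cj} F_{ic} with c = j-1.\<close>
fun F_aux :: "(Cq \<Rightarrow> 'a::ring_1) \<Rightarrow> nat \<Rightarrow> (nat \<Rightarrow> 'a) \<Rightarrow> nat \<Rightarrow> nat \<Rightarrow> 'a" where
  "F_aux \<iota> m F i 0 = 1"
| "F_aux \<iota> m F i (Suc 0) = F i"
| "F_aux \<iota> m F i (Suc (Suc d)) =
     (let c = i + Suc d in - (\<iota> (qq m c) * F_aux \<iota> m F i (Suc d) * F c) + F c * F_aux \<iota> m F i (Suc d))"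

definition Fij :: "(Cq \<Rightarrow> 'a::ring_1) \<Rightarrow> nat \<Rightarrow> (nat \<Rightarrow> 'a) \<Rightarrow> nat \<Rightarrow> nat \<Rightarrow> 'a" where
  "Fij \<iota> m F i j = F_aux \<iota> m F i (j - i)"

text \<open>The defining relations of U_q(gl(m|n)) for elements K, Kinv (K_j^{-1}), E (E i = E_{i,i+1}),
  F (F i = F_{i,i+1}) of a C(q)-algebra.  Generator E i / F i is odd iff i = m.\<close>
definition uq_relations ::
  "nat \<Rightarrow> nat \<Rightarrow> (Cq \<Rightarrow> 'a::ring_1) \<Rightarrow> (nat \<Rightarrow> 'a) \<Rightarrow> (nat \<Rightarrow> 'a) \<Rightarrow> (nat \<Rightarrow> 'a) \<Rightarrow> (nat \<Rightarrow> 'a) \<Rightarrow> bool" where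
  "uq_relations m n \<iota> K Kinv E F \<longleftrightarrow>
    cq_algebra \<iota> \<and>
    (\<forall>i\<in>{1..m+n}. \<forall>j\<in>{1..m+n}. K i * K j = K j * K i) \<and>
    (\<forall>i\<in>{1..m+n}. K i * Kinv i = 1 \<and> Kinv i * K i = 1) \<and>
    (\<forall>i\<in>{1..m+n}. \<forall>j\<in>{1..<m+n}.
        K i * E j * Kinv i = \<iota> (qq m i powi (delta i j - delta i (j+1))) * E j \<and>
        K i * F j * Kinv i = \<iota> (qq m i powi (- (delta i j - delta i (j+1)))) * F j) \<and>
    (\<forall>i\<in>{1..<m+n}. \<forall>j\<in>{1..<m+n}.
        sbr (i = m) (j = m) (E i) (F j) =
          (if i = j then (K i * Kinv (i+1) - Kinv i * K (i+1)) * \<iota> (inverse (qq m i - inverse (qq m i)))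
           else 0)) \<and>
    E m * E m = 0 \<and> F m * F m = 0 \<and>
    (\<forall>i\<in>{1..<m+n}. \<forall>j\<in>{1..<m+n}. (i + 1 < j \<or> j + 1 < i) \<longrightarrow>
        E i * E j = E j * E i \<and> F i * F j = F j * F i) \<and>
    (\<forall>i\<in>{1..<m+n}. \<forall>j\<in>{1..<m+n}. (i + 1 = j \<or> j + 1 = i) \<and> i \<noteq> m \<longrightarrow>
        E i * E i * E j - \<iota> (qv + inverse qv) * E i * E j * E i + E j * E i * E i = 0 \<and>
        F i * F i * F j - \<iota> (qv + inverse qv) * F i * F j * F i + F j * F i * F i = 0) \<and>
    (2 \<le> m \<and> 2 \<le> n \<longrightarrow>
        sbr True True (Eij \<iota> m E (m-1) (m+2)) (E m) = 0 \<and>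
        sbr True True (Fij \<iota> m F (m-1) (m+2)) (F m) = 0)"

definition I1 :: "nat \<Rightarrow> nat \<Rightarrow> (nat \<times> nat) set" where
  "I1 m n = {(i, j). 1 \<le> i \<and> i \<le> m \<and> m < j \<and> j \<le> m + n}"

definition prec :: "nat \<times> nat \<Rightarrow> nat \<times> nat \<Rightarrow> bool" where
  "prec p r \<longleftrightarrow> snd p > snd r \<or> (snd p = snd r \<and> fst p < fst r)"

definition preceq :: "nat \<times> nat \<Rightarrow> nat \<times> nat \<Rightarrow> bool" where
  "preceq p r \<longleftrightarrow> prec p r \<or> p = r"

definition F_set :: "(Cq \<Rightarrow> 'a::ring_1) \<Rightarrow> nat \<Rightarrow> (nat \<Rightarrow> 'a) \<Rightarrow> (nat \<times> nat) set \<Rightarrow> 'a" where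
  "F_set \<iota> m F I = prod_list (map (\<lambda>(i, j). Fij \<iota> m F i j)
      (THE xs. set xs = I \<and> sorted_wrt prec xs))"

definition F_le :: "(Cq \<Rightarrow> 'a::ring_1) \<Rightarrow> nat \<Rightarrow> nat \<Rightarrow> (nat \<Rightarrow> 'a) \<Rightarrow> nat \<times> nat \<Rightarrow> 'a" where
  "F_le \<iota> m n F p = F_set \<iota> m F {r \<in> I1 m n. preceq r p}"

definition F_lt :: "(Cq \<Rightarrow> 'a::ring_1) \<Rightarrow> nat \<Rightarrow> nat \<Rightarrow> (nat \<Rightarrow> 'a) \<Rightarrow> nat \<times> nat \<Rightarrow> 'a" where
  "F_lt \<iota> m n F p = F_set \<iota> m F {r \<in> I1 m n. prec r p}"

end

theory Submission imports Defs "HOL-Library.Product_Lexorder" begin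

lemma qv_nz: "qv \<noteq> 0"
  unfolding qv_def by (simp add: Zero_fract_def eq_fract)

lemma qv2_nz: "qv + inverse qv \<noteq> 0"
proof -
  have p: "[:0,1:] * [:0,1:] + 1 \<noteq> (0::complex poly)"
  proof
    assume "[:0,1:] * [:0,1:] + 1 = (0::complex poly)"
    then have "poly ([:0,1:] * [:0,1:] + 1) 0 = poly (0::complex poly) 0" by simp
    then show False by simp
  qed
  show ?thesis unfolding qv_def using p
    by (simp add: Zero_fract_def eq_fract)
qed

definition pkey :: "nat \<times> nat \<Rightarrow> int \<times> int" where "pkey r = (- int (snd r), int (fst r))"

lemma prec_pkey: "prec x y \<longleftrightarrow> pkey x < pkey y"
  unfolding prec_def pkey_def by (auto simp: less_prod_def')

lemma prec_pkey': "prec = (\<lambda>x y. pkey x < pkey y)"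
  by (intro ext) (simp add: prec_pkey)

lemma inj_pkey: "inj pkey"
  unfolding inj_def pkey_def by (auto simp: prod_eq_iff)

lemma sorted_unique:
  assumes "finite S"
  shows "\<exists>!xs. set xs = S \<and> sorted_wrt prec xs"
proof -
  obtain L where L: "sorted_wrt (<) L" "set L = pkey ` S"
    using ex1_sorted_list_for_set_if_finite[of "pkey ` S"] assms by auto
  define kinv :: "int \<times> int \<Rightarrow> nat \<times> nat" where "kinv l = (nat (snd l), nat (- fst l))" for l
  have kk: "kinv (pkey r) = r" for r unfolding kinv_def pkey_def by simp
  have mk: "map pkey (map kinv L) = L"
  proof -
    have "\<forall>l\<in>set L. pkey (kinv l) = l" using L(2) kk by auto
    then show ?thesis by (induction L) auto
  qed
  have ex: "set (map kinv L) = S \<and> sorted_wrt prec (map kinv L)"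
  proof
    show "set (map kinv L) = S" using L(2) kk by (simp add: image_image)
    have "sorted_wrt (<) (map pkey (map kinv L))" using mk L(1) by simp
    then show "sorted_wrt prec (map kinv L)" by (simp add: sorted_wrt_map prec_pkey')
  qed
  have un: "xs = ys" if "set xs = S \<and> sorted_wrt prec xs" "set ys = S \<and> sorted_wrt prec ys" for xs ys
  proof -
    have "sorted_wrt (<) (map pkey xs)" "sorted_wrt (<) (map pkey ys)"
      using that by (simp_all add: sorted_wrt_map prec_pkey')
    moreover have "set (map pkey ys) = set (map pkey xs)" using that by simp
    ultimately have "map pkey ys = map pkey xs" by (rule strict_sorted_equal)
    then show ?thesis using inj_pkey by simp
  qed
  show ?thesis using ex un by blast
qed

lemma I1_finite: "finite {r \<in> I1 m n. P r}"
proof -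
  have "{r \<in> I1 m n. P r} \<subseteq> {1..m} \<times> {m<..m+n}" unfolding I1_def by auto
  then show ?thesis by (rule finite_subset) simp
qed

locale UQ =
  fixes m n :: nat and \<iota> :: "Cq \<Rightarrow> 'a::ring_1" and K Kinv E F :: "nat \<Rightarrow> 'a"
  assumes R: "uq_relations m n \<iota> K Kinv E F"
begin

abbreviation "N \<equiv> m + n"
definition Q :: 'a where "Q = \<iota> qv"
definition Qi :: 'a where "Qi = \<iota> (inverse qv)"
definition G :: "nat \<Rightarrow> nat \<Rightarrow> 'a" where "G i j = Fij \<iota> m F i j"

lemma alg: "cq_algebra \<iota>" using R unfolding uq_relations_def by blast

lemma iota_mult: "\<iota> (x * y) = \<iota> x * \<iota> y" using alg unfolding cq_algebra_def by blast
lemma iota_add: "\<iota> (x + y) = \<iota> x + \<iota> y" using alg unfolding cq_algebra_def by blast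
lemma iota_one: "\<iota> 1 = 1" using alg unfolding cq_algebra_def by blast
lemma iota_central: "\<iota> x * a = a * \<iota> x" using alg unfolding cq_algebra_def by blast

lemma QQi: "Q * Qi = 1" "Qi * Q = 1"
  unfolding Q_def Qi_def using qv_nz by (simp_all flip: iota_mult add: iota_one)

lemma QQi2: "Q * (Qi * x) = x" "Qi * (Q * x) = x"
  by (simp_all add: mult.assoc[symmetric] QQi)

lemma cc: "x * (Q * y) = Q * (x * y)" "x * (Qi * y) = Qi * (x * y)" "x * Q = Q * x" "x * Qi = Qi * x"
  unfolding Q_def Qi_def by (metis iota_central mult.assoc)+

lemma two_inv: "\<iota> (inverse (qv + inverse qv)) * (Q + Qi) = 1"
  unfolding Q_def Qi_def using qv2_nz by (simp flip: iota_mult iota_add add: iota_one)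

definition qf :: "nat \<Rightarrow> 'a" where "qf c = \<iota> (qq m c)"
lemma qf_le: "c \<le> m \<Longrightarrow> qf c = Q" unfolding qf_def qq_def Q_def by simp
lemma qf_gt: "m < c \<Longrightarrow> qf c = Qi" unfolding qf_def qq_def Qi_def by simp

lemma Fsq: "F m * F m = 0" using R unfolding uq_relations_def by blast

lemma Ffar: "1 \<le> i \<Longrightarrow> i < N \<Longrightarrow> 1 \<le> j \<Longrightarrow> j < N \<Longrightarrow> i + 1 < j \<or> j + 1 < i \<Longrightarrow> F i * F j = F j * F i"
  using R unfolding uq_relations_def by auto

lemma Fserre: "1 \<le> i \<Longrightarrow> i < N \<Longrightarrow> 1 \<le> j \<Longrightarrow> j < N \<Longrightarrow> i + 1 = j \<or> j + 1 = i \<Longrightarrow> i \<noteq> m \<Longrightarrow>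
   F i * F i * F j - (Q + Qi) * F i * F j * F i + F j * F i * F i = 0"
proof -
  assume a: "1 \<le> i" "i < N" "1 \<le> j" "j < N" "i + 1 = j \<or> j + 1 = i" "i \<noteq> m"
  have "F i * F i * F j - \<iota> (qv + inverse qv) * F i * F j * F i + F j * F i * F i = 0"
    using R a unfolding uq_relations_def by auto
  then show ?thesis by (simp add: iota_add Q_def Qi_def)
qed

lemma Fss: "2 \<le> m \<Longrightarrow> 2 \<le> n \<Longrightarrow> G (m-1) (m+2) * F m + F m * G (m-1) (m+2) = 0"
  using R unfolding uq_relations_def sbr_def G_def by auto

lemma G1: "G i (Suc i) = F i"
  unfolding G_def Fij_def by simp

lemma Gs: "i < j \<Longrightarrow> G i (Suc j) = F j * G i j - qf j * G i j * F j"
proof -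
  assume "i < j"
  then obtain d where d: "j - i = Suc d" by (cases "j - i") auto
  have e: "Suc j - i = Suc (Suc d)" using d by simp
  have c: "i + Suc d = j" using d \<open>i < j\<close> by simp
  show ?thesis unfolding G_def Fij_def e d using c by (simp add: Let_def qf_def)
qed


lemma qcc0: "x * (qf c * y) = qf c * (x * y)" "x * qf c = qf c * x"
  unfolding qf_def by (metis iota_central mult.assoc)+

lemma qcc: "F a * (qf c * y) = qf c * (F a * y)" "F a * qf c = qf c * F a"
  "G a b * (qf c * y) = qf c * (G a b * y)" "G a b * qf c = qf c * G a b"
  by (rule qcc0)+
lemma qf_comm: "qf a * (qf b * y) = qf b * (qf a * y)" "qf a * qf b = qf b * qf a"
  by (rule qcc0)+

lemma ccF: "F a * (Q * y) = Q * (F a * y)" "F a * Q = Q * F a"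
  "F a * (Qi * y) = Qi * (F a * y)" "F a * Qi = Qi * F a"
  "G a b * (Q * y) = Q * (G a b * y)" "G a b * Q = Q * G a b"
  "G a b * (Qi * y) = Qi * (G a b * y)" "G a b * Qi = Qi * G a b"
  by (rule cc)+

lemma comm2: "a * b = b * (a::'a) \<Longrightarrow> a * (b * y) = b * (a * y)"
proof -
  assume h: "a * b = b * a"
  have "a * (b * y) = (a * b) * y" by (rule mult.assoc[symmetric])
  also have "\<dots> = (b * a) * y" using h by simp
  also have "\<dots> = b * (a * y)" by (rule mult.assoc)
  finally show ?thesis .
qed

lemma far:
  assumes "1 \<le> i" "i < j" "j \<le> N" "1 \<le> c" "c < N" "c + 1 < i \<or> j < c"
  shows "F c * G i j = G i j * F c"
proof -
  have "Suc i \<le> j" using assms by simp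
  then show ?thesis using assms
  proof (induction j rule: dec_induct)
    case base
    have "F c * F i = F i * F c" using base by (intro Ffar) auto
    then show ?case by (simp add: G1)
  next
    case (step j)
    have h1: "F c * F j = F j * F c" using step by (intro Ffar) auto
    have h2: "F c * G i j = G i j * F c" using step by auto
    show ?case using step(1)
      by (simp add: Gs algebra_simps h1 h2 comm2[OF h1] comm2[OF h2] qcc)
  qed
qed

lemma Lrec:
  assumes "1 \<le> i" "Suc (Suc i) \<le> j" "j \<le> N"
  shows "G i j = G (Suc i) j * F i - qf (Suc i) * F i * G (Suc i) j"
  using assms(2) assms
proof (induction j rule: dec_induct)
  case base
  have "G i (Suc (Suc i)) = F (Suc i) * F i - qf (Suc i) * F i * F (Suc i)"
    by (simp add: Gs G1)
  then show ?case by (simp add: G1)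
next
  case (step n)
  have h1: "F n * F i = F i * F n" using step by (intro Ffar) auto
  have e1: "G i (Suc n) = F n * G i n - qf n * G i n * F n" using step by (intro Gs) auto
  have e2: "G (Suc i) (Suc n) = F n * G (Suc i) n - qf n * G (Suc i) n * F n" using step by (intro Gs) auto
  have ih: "G i n = G (Suc i) n * F i - qf (Suc i) * F i * G (Suc i) n" using step by auto
  show ?case unfolding e1 e2 ih
    by (simp add: algebra_simps h1 comm2[OF h1] qcc qf_comm)
qed

definition srr :: "'a \<Rightarrow> 'a \<Rightarrow> 'a" where
  "srr x y = x * x * y - (Q + Qi) * x * y * x + y * x * x"

lemma srrR: "x * Z = Z * x \<Longrightarrow> srr x (y * Z) = srr x y * Z"
proof -
  assume h: "x * Z = Z * x"
  show ?thesis unfolding srr_def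
    by (simp add: algebra_simps h[symmetric] comm2[OF h[symmetric]])
qed
lemma srrL: "x * Z = Z * x \<Longrightarrow> srr x (Z * y) = Z * srr x y"
proof -
  assume h: "x * Z = Z * x"
  show ?thesis unfolding srr_def
    by (simp add: algebra_simps h comm2[OF h] cc(1,2)[of Z])
qed
lemma srr_diff: "srr x (a - b) = srr x a - srr x b"
  unfolding srr_def by (simp add: algebra_simps)
lemma srr_qf: "srr x (qf c * a) = qf c * srr x a"
  unfolding srr_def by (simp add: algebra_simps qcc0(1)[of x] qcc0(2)[of x] qcc0(1)[of "Q"] qcc0(1)[of "Qi"])

lemma Fserre': "1 \<le> i \<Longrightarrow> i < N \<Longrightarrow> 1 \<le> j \<Longrightarrow> j < N \<Longrightarrow> i + 1 = j \<or> j + 1 = i \<Longrightarrow> i \<noteq> m \<Longrightarrow>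
   srr (F i) (F j) = 0"
  unfolding srr_def by (rule Fserre)

lemma serreR:
  assumes "1 \<le> i" "i < j" "j < N" "j \<noteq> m"
  shows "srr (F j) (G i j) = 0"
proof (cases "j = Suc i")
  case True
  then show ?thesis using assms by (simp add: G1 Fserre')
next
  case False
  then obtain j' where j': "j = Suc j'" "i < j'" using assms by (cases j) auto
  have c: "F j * G i j' = G i j' * F j" using assms j' by (intro far) auto
  have s: "srr (F j) (F j') = 0" using assms j' by (intro Fserre') auto
  show ?thesis unfolding j'(1) Gs[OF j'(2)] srr_diff mult.assoc srr_qf
    using c s j' by (simp add: srrR srrL mult.assoc[symmetric])
qed

lemma serreL:
  assumes "2 \<le> i" "i < j" "j \<le> N" "i - 1 \<noteq> m"
  shows "srr (F (i - 1)) (G i j) = 0"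
proof -
  have "Suc i \<le> j" using assms by simp
  then show ?thesis using assms
  proof (induction j rule: dec_induct)
    case base
    then show ?case by (simp add: G1 Fserre')
  next
    case (step j)
    have c: "F (i - 1) * F j = F j * F (i - 1)" using step by (intro Ffar) auto
    have ih: "srr (F (i - 1)) (G i j) = 0" using step by auto
    have e: "G i (Suc j) = F j * G i j - qf j * (G i j * F j)" using step by (simp add: Gs mult.assoc)
    show ?case unfolding e srr_diff srr_qf using c ih
      by (simp add: srrR srrL)
  qed
qed


lemma qf_central: "qf c * z = z * qf c" by (simp add: qcc0)
lemma Q_central: "Q * z = z * Q" by (simp add: cc)
lemma Qi_central: "Qi * z = z * Qi" by (simp add: cc)

lemma cent_rules:
  assumes "\<And>x. p * x = x * (p::'a)"
  shows "u * (p * y) = p * (u * y)" "u * p = p * u"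
proof -
  show "u * p = p * u" using assms by simp
  have "u * (p * y) = (u * p) * y" by (simp add: mult.assoc)
  also have "\<dots> = (p * u) * y" using assms by simp
  also have "\<dots> = p * (u * y)" by (simp add: mult.assoc)
  finally show "u * (p * y) = p * (u * y)" .
qed

lemma comm_qcom:
  assumes h1: "a * x = x * a" and h2: "a * y = y * a" and hr: "\<And>z. r * z = z * (r::'a)"
  shows "a * (x * y - r * y * x) = (x * y - r * y * x) * a"
  by (simp add: algebra_simps h1 h2 comm2[OF h1] comm2[OF h2] cent_rules[OF hr, of a])

lemma D0:
  assumes pp: "p * r = 1" "r * p = 1" and pc: "\<And>x. p * x = x * p" and rc: "\<And>x. r * x = x * r"
    and two: "p + r = Q + Qi"
    and Su: "srr v u = 0" and Sw: "srr v w = 0" and uw: "u * w = w * u"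
  shows "v * (w * (v * u - p * u * v) - p * (v * u - p * u * v) * w) =
         (w * (v * u - p * u * v) - p * (v * u - p * u * v) * w) * v"
proof -
  let ?T = "v * (w * (v * u - p * u * v) - p * (v * u - p * u * v) * w) -
         (w * (v * u - p * u * v) - p * (v * u - p * u * v) * w) * v"
  have pp2: "p * (r * y) = y" "r * (p * y) = y" for y
    by (simp_all add: mult.assoc[symmetric] pp)
  have uw2: "w * (u * y) = u * (w * y)" for y by (rule comm2[OF uw[symmetric]])
  have "(p + r) * ?T = - (srr v w * u) + p * p * (u * srr v w) - p * p * (srr v u * w) + w * srr v u"
    unfolding srr_def two[symmetric]
    by (simp add: algebra_simps pp2 cent_rules[OF pc, of u] cent_rules[OF pc, of v] cent_rules[OF pc, of w]
       cent_rules[OF rc, of u] cent_rules[OF rc, of v] cent_rules[OF rc, of w] uw[symmetric] uw2)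
  then have "(p + r) * ?T = 0" using Su Sw by simp
  then have "\<iota> (inverse (qv + inverse qv)) * ((p + r) * ?T) = 0" by simp
  then have "?T = 0" using two_inv two by (simp add: mult.assoc[symmetric])
  then show ?thesis by simp
qed

lemma IC:
  assumes "1 \<le> s" "s < c" "c + 2 \<le> t" "t \<le> N" "c \<noteq> m"
  shows "F c * G s t = G s t * F c"
proof -
  have base0: "F c * G s (c + 2) = G s (c + 2) * F c" if "1 \<le> s" "s < c" for s
  proof -
    have "s \<le> c - 1" using that by simp
    then show ?thesis using that
    proof (induction s rule: inc_induct)
      case base
      let ?p = "if c < m then Q else Qi"
      let ?r = "if c < m then Qi else Q"
      have q1: "qf c = ?p" using assms by (simp add: qf_le qf_gt)
      have q2: "qf (Suc c) = ?p" using assms by (simp add: qf_le qf_gt)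
      have pp: "?p * ?r = 1" "?r * ?p = 1" by (simp_all add: QQi)
      have pc: "?p * x = x * ?p" "?r * x = x * ?r" for x by (simp_all add: cc)
      have two: "?p + ?r = Q + Qi" by (simp add: add.commute)
      have c1: "c - 1 + 1 = c" using base by simp
      have Su: "srr (F c) (F (c - 1)) = 0" using assms base by (intro Fserre') auto
      have Sw: "srr (F c) (F (Suc c)) = 0" using assms base by (intro Fserre') auto
      have uw: "F (c - 1) * F (Suc c) = F (Suc c) * F (c - 1)" using assms base by (intro Ffar) auto
      have e1: "G (c - 1) (c + 2) = F (Suc c) * G (c - 1) (Suc c) - qf (Suc c) * G (c - 1) (Suc c) * F (Suc c)"
        using Gs[of "c - 1" "Suc c"] base by simp
      have e2: "G (c - 1) (Suc c) = F c * F (c - 1) - qf c * F (c - 1) * F c"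
        using Gs[of "c - 1" "c"] G1[of "c - 1"] base by simp
      show ?case unfolding e1 e2 q1 q2
        by (rule D0[OF pp pc two Su Sw uw])
    next
      case (step s)
      have e: "G s (c + 2) = G (Suc s) (c + 2) * F s - qf (Suc s) * F s * G (Suc s) (c + 2)"
        using step assms by (intro Lrec) auto
      have h1: "F c * G (Suc s) (c + 2) = G (Suc s) (c + 2) * F c" using step by auto
      have h2: "F c * F s = F s * F c" using step assms by (intro Ffar) auto
      show ?case unfolding e by (rule comm_qcom[OF h1 h2 qf_central])
    qed
  qed
  have "c + 2 \<le> t" using assms by simp
  then show ?thesis using assms
  proof (induction t rule: dec_induct)
    case base
    then show ?case using base0 by auto
  next
    case (step t)
    have e: "G s (Suc t) = F t * G s t - qf t * G s t * F t" using step by (intro Gs) auto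
    have h1: "F c * F t = F t * F c" using step by (intro Ffar) auto
    have h2: "F c * G s t = G s t * F c" using step by auto
    show ?case unfolding e by (rule comm_qcom[OF h1 h2 qf_central])
  qed
qed

lemma sq_aux:
  assumes GG: "g * g = 0" and S: "srr b g = 0"
  shows "g * (b * (b * g)) = (Q + Qi) * (g * (b * (g * b)))"
    "g * (b * (g * b)) = b * (g * (b * g))"
proof -
  have GG2: "g * (g * y) = 0" for y using GG by (simp add: mult.assoc[symmetric])
  have "g * srr b g = 0" "srr b g * g = 0" using S by simp_all
  then have a: "g * (b * (b * g)) - (Q + Qi) * (g * (b * (g * b))) = 0"
     and b: "(Q + Qi) * (b * (g * (b * g))) = g * (b * (b * g))"
    unfolding srr_def by (simp_all add: algebra_simps GG GG2 cc(1,2,3,4)[of g] cc(1,2,3,4)[of b])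
  from a show "g * (b * (b * g)) = (Q + Qi) * (g * (b * (g * b)))" by simp
  then have "(Q + Qi) * (g * (b * (g * b))) = (Q + Qi) * (b * (g * (b * g)))" using b by simp
  then have "\<iota> (inverse (qv + inverse qv)) * ((Q + Qi) * (g * (b * (g * b)))) =
             \<iota> (inverse (qv + inverse qv)) * ((Q + Qi) * (b * (g * (b * g))))" by simp
  then show "g * (b * (g * b)) = b * (g * (b * g))" using two_inv by (simp add: mult.assoc[symmetric])
qed

lemma sqR:
  assumes GG: "g * g = 0" and S: "srr b g = 0" and s: "s = Q \<or> s = Qi"
  shows "(b * g - s * g * b) * (b * g - s * g * b) = 0"
proof -
  have GG2: "g * (g * y) = 0" for y using GG by (simp add: mult.assoc[symmetric])
  note e = sq_aux[OF GG S]
  from s show ?thesis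
    by (auto simp: algebra_simps GG GG2 e cc(1,2,3,4)[of g] cc(1,2,3,4)[of b] QQi2)
qed

lemma sqL:
  assumes GG: "g * g = 0" and S: "srr b g = 0" and s: "s = Q \<or> s = Qi"
  shows "(g * b - s * b * g) * (g * b - s * b * g) = 0"
proof -
  have GG2: "g * (g * y) = 0" for y using GG by (simp add: mult.assoc[symmetric])
  note e = sq_aux[OF GG S]
  from s show ?thesis
    by (auto simp: algebra_simps GG GG2 e cc(1,2,3,4)[of g] cc(1,2,3,4)[of b] QQi2)
qed

lemma N1:
  assumes "1 \<le> i" "i \<le> m" "m < k" "k \<le> N"
  shows "G i k * G i k = 0"
proof -
  have b: "G i (Suc m) * G i (Suc m) = 0" if "1 \<le> i" "i \<le> m" for i
    using that(2) that
  proof (induction i rule: inc_induct)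
    case base
    then show ?case by (simp add: G1 Fsq)
  next
    case (step i)
    have e: "G i (Suc m) = G (Suc i) (Suc m) * F i - Q * F i * G (Suc i) (Suc m)"
      using Lrec[of i "Suc m"] step assms by (simp add: qf_le)
    have S: "srr (F (Suc i - 1)) (G (Suc i) (Suc m)) = 0" using step assms by (intro serreL) auto
    have GG: "G (Suc i) (Suc m) * G (Suc i) (Suc m) = 0" using step by auto
    show ?case unfolding e using sqL[OF GG] S by simp
  qed
  have "Suc m \<le> k" using assms by simp
  then show ?thesis using assms
  proof (induction k rule: dec_induct)
    case base
    then show ?case using b by auto
  next
    case (step k)
    have e: "G i (Suc k) = F k * G i k - Qi * G i k * F k" using step by (simp add: Gs qf_gt)
    have S: "srr (F k) (G i k) = 0" using step by (intro serreR) auto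
    have GG: "G i k * G i k = 0" using step by auto
    show ?case unfolding e using sqR[OF GG S] by simp
  qed
qed

lemma ass: "x * y = (z::'a) \<Longrightarrow> x * (y * w) = z * w"
  by (simp add: mult.assoc[symmetric])

lemma qstep1:
  assumes gf: "g * f = f * g" and gH: "g * H = lam * (H * g)"
    and lc: "\<And>z. lam * z = z * (lam::'a)" and rc: "\<And>z. r * z = z * (r::'a)"
  shows "g * (f * H - r * H * f) = lam * ((f * H - r * H * f) * g)"
proof -
  have lr: "lam * (r * w) = r * (lam * w)" for w by (metis lc mult.assoc)
  show ?thesis
    by (simp add: algebra_simps gf comm2[OF gf] gH ass[OF gH] cent_rules[OF lc, of g] cent_rules[OF lc, of f] cent_rules[OF lc, of H] cent_rules[OF rc, of g] cent_rules[OF rc, of f] cent_rules[OF rc, of H] lr)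
qed

lemma qstep2:
  assumes gf: "g * f = f * g" and gH: "g * H = lam * (H * g)"
    and lc: "\<And>z. lam * z = z * (lam::'a)" and rc: "\<And>z. r * z = z * (r::'a)"
  shows "g * (H * f - r * f * H) = lam * ((H * f - r * f * H) * g)"
proof -
  have lr: "lam * (r * w) = r * (lam * w)" for w by (metis lc mult.assoc)
  have fg: "f * g = g * f" using gf by simp
  show ?thesis
    by (simp add: algebra_simps gf comm2[OF gf] gH ass[OF gH] cent_rules[OF lc, of g] cent_rules[OF lc, of f] cent_rules[OF lc, of H] cent_rules[OF rc, of g] cent_rules[OF rc, of f] cent_rules[OF rc, of H] lr)
qed

lemma mQ_central: "(- Q) * z = z * (- Q)" by (simp add: cc)
lemma m1_central: "(- 1) * z = z * (- (1::'a))" by simp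

lemma N2:
  assumes "1 \<le> s" "s < i" "i \<le> m" "m < k" "k \<le> N"
  shows "G i k * G s k = (- Q) * (G s k * G i k)"
proof -
  have "s \<le> i - 1" using assms by simp
  then show ?thesis using assms
  proof (induction s rule: inc_induct)
    case base
    have e: "G (i - 1) k = G i k * F (i - 1) - Q * F (i - 1) * G i k"
      using Lrec[of "i - 1" k] base by (simp add: qf_le)
    have GG: "G i k * G i k = 0" using base by (intro N1) auto
    have GG2: "G i k * (G i k * y) = 0" for y using GG by (simp add: mult.assoc[symmetric])
    show ?case unfolding e
      by (simp add: algebra_simps GG GG2 ccF)
  next
    case (step s)
    have e: "G s k = G (Suc s) k * F s - Q * F s * G (Suc s) k"
      using Lrec[of s k] step by (simp add: qf_le)
    have "F s * G i k = G i k * F s" using step by (intro far) auto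
    then have gf: "G i k * F s = F s * G i k" by simp
    have ih: "G i k * G (Suc s) k = (- Q) * (G (Suc s) k * G i k)" using step by auto
    show ?case unfolding e by (rule qstep2[OF gf ih mQ_central Q_central])
  qed
qed

lemma N3:
  assumes "1 \<le> i" "i \<le> m" "m < k" "k < t" "t \<le> N"
  shows "G i k * G i t = (- Q) * (G i t * G i k)"
proof -
  have "Suc k \<le> t" using assms by simp
  then show ?thesis using assms
  proof (induction t rule: dec_induct)
    case base
    have e: "G i (Suc k) = F k * G i k - Qi * G i k * F k" using base by (simp add: Gs qf_gt)
    have GG: "G i k * G i k = 0" using base by (intro N1) auto
    have GG2: "G i k * (G i k * y) = 0" for y using GG by (simp add: mult.assoc[symmetric])
    show ?case unfolding e
      by (simp add: algebra_simps GG GG2 ccF QQi2)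
  next
    case (step t)
    have e: "G i (Suc t) = F t * G i t - Qi * G i t * F t" using step by (simp add: Gs qf_gt)
    have "F t * G i k = G i k * F t" using step by (intro far) auto
    then have gf: "G i k * F t = F t * G i k" by simp
    have ih: "G i k * G i t = (- Q) * (G i t * G i k)" using step by auto
    show ?case unfolding e by (rule qstep1[OF gf ih mQ_central Qi_central])
  qed
qed

lemma CB0:
  assumes aa: "a * a = 0" and xz: "x * z = z * x"
    and hL: "L = a * x - Q * x * a" and hR: "R = z * a - Qi * a * z" and hO: "Ob = z * L - Qi * L * z"
    and hyp: "Ob * a + a * Ob = 0"
  shows "L * R + R * L = (Qi - Q) * Ob * a"
proof -
  have aa2: "a * (a * y) = 0" for y using aa by (simp add: mult.assoc[symmetric])
  have "L * R + R * L - (Qi - Q) * Ob * a = - Qi * (Ob * a + a * Ob)"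
    unfolding hO hL hR
    by (simp add: algebra_simps aa aa2 xz comm2[OF xz] cc(1,2,3,4)[of a] cc(1,2,3,4)[of x]
        cc(1,2,3,4)[of z] QQi2)
  then show ?thesis using hyp by simp
qed

lemma CBR:
  assumes hA: "A = y * a0 - Qi * a0 * y" and hO0: "O0 = y * L0 - Qi * L0 * y"
    and hA': "A' = z * A - Qi * A * z" and hO: "Ob = z * O0 - Qi * O0 * z"
    and zL: "z * L0 = L0 * z" and za: "z * a0 = a0 * z"
    and yA': "y * A' = A' * y" and yO: "y * Ob = Ob * y"
    and IH: "L0 * A + A * L0 = (Qi - Q) * O0 * a0"
  shows "O0 * A' + A' * O0 = (Qi - Q) * Ob * A"
proof -
  have s1: "L0 * A' + A' * L0 = z * (L0 * A + A * L0) - Qi * (L0 * A + A * L0) * z"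
    unfolding hA' by (simp add: algebra_simps QQi2 zL comm2[OF zL] cc(1,2,3,4)[of L0] cc(1,2,3,4)[of z])
  also have "\<dots> = (Qi - Q) * Ob * a0"
    unfolding IH hO by (simp add: algebra_simps QQi2 za[symmetric] comm2[OF za[symmetric]]
      cc(1,2,3,4)[of z] cc(1,2,3,4)[of O0] cc(1,2,3,4)[of a0])
  finally have s2: "L0 * A' + A' * L0 = (Qi - Q) * Ob * a0" .
  have "O0 * A' + A' * O0 = y * (L0 * A' + A' * L0) - Qi * (L0 * A' + A' * L0) * y"
    unfolding hO0 by (simp add: algebra_simps QQi2 yA'[symmetric] comm2[OF yA'[symmetric]]
      cc(1,2,3,4)[of y] cc(1,2,3,4)[of L0] cc(1,2,3,4)[of A'])
  also have "\<dots> = (Qi - Q) * Ob * A"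
    unfolding s2 hA by (simp add: algebra_simps QQi2 yO comm2[OF yO]
      cc(1,2,3,4)[of y] cc(1,2,3,4)[of Ob] cc(1,2,3,4)[of a0])
  finally show ?thesis .
qed

lemma CBL:
  assumes hO: "O0 = C * x - Q * x * C" and hD: "D = B * w - Q * w * B"
    and hP: "P = D * x - Q * x * D" and hE': "Ep = Eb * w - Q * w * Eb"
    and wO: "w * O0 = O0 * w" and wP: "w * P = P * w" and xB: "x * B = B * x" and xE: "x * Eb = Eb * x"
    and IH: "C * B + B * C = (Qi - Q) * D * Eb"
  shows "O0 * D + D * O0 = (Qi - Q) * P * Ep"
proof -
  have "O0 * B + B * O0 = (C * B + B * C) * x - Q * x * (C * B + B * C)"
    unfolding hO by (simp add: algebra_simps QQi2 xB[symmetric] comm2[OF xB[symmetric]]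
      cc(1,2,3,4)[of x] cc(1,2,3,4)[of B] cc(1,2,3,4)[of C])
  also have "\<dots> = (Qi - Q) * P * Eb"
    unfolding IH hP by (simp add: algebra_simps QQi2 xE[symmetric] comm2[OF xE[symmetric]]
      cc(1,2,3,4)[of x] cc(1,2,3,4)[of D] cc(1,2,3,4)[of Eb])
  finally have s1: "O0 * B + B * O0 = (Qi - Q) * P * Eb" .
  have "O0 * D + D * O0 = (O0 * B + B * O0) * w - Q * w * (O0 * B + B * O0)"
    unfolding hD by (simp add: algebra_simps QQi2 wO comm2[OF wO]
      cc(1,2,3,4)[of w] cc(1,2,3,4)[of B] cc(1,2,3,4)[of O0])
  also have "\<dots> = (Qi - Q) * P * Ep"
    unfolding s1 hE' by (simp add: algebra_simps QQi2 wP comm2[OF wP]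
      cc(1,2,3,4)[of w] cc(1,2,3,4)[of P] cc(1,2,3,4)[of Eb])
  finally show ?thesis .
qed

lemma NB0:
  assumes hA': "A' = z * A - Qi * A * z" and hO: "Ob = z * O0 - Qi * O0 * z"
    and AO: "A * O0 = (- Q) * (O0 * A)" and CB: "O0 * A' + A' * O0 = (Qi - Q) * Ob * A"
  shows "A * Ob + Ob * A = 0"
proof -
  have "A * Ob + Ob * A = - Q * (O0 * A' + A' * O0 - (Qi - Q) * Ob * A)
      - Qi * ((A * O0 + Q * (O0 * A)) * z) + Q * (z * (A * O0 + Q * (O0 * A)))"
    unfolding hA' hO
    by (simp add: algebra_simps cc(1,2,3,4)[of A] cc(1,2,3,4)[of O0] cc(1,2,3,4)[of z] QQi2)
  also have "\<dots> = 0" using AO CB by simp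
  finally show ?thesis .
qed

lemma CB:
  assumes "1 \<le> i" "Suc i \<le> m" "m < k" "Suc k \<le> N"
  shows "G i k * G (Suc i) (Suc k) + G (Suc i) (Suc k) * G i k = (Qi - Q) * G i (Suc k) * G (Suc i) k"
proof -
  have mN: "Suc (Suc m) \<le> N" using assms by simp
  have b0: "G i (Suc m) * G (Suc i) (Suc (Suc m)) + G (Suc i) (Suc (Suc m)) * G i (Suc m)
      = (Qi - Q) * G i (Suc (Suc m)) * G (Suc i) (Suc m)" if "1 \<le> i" "Suc i \<le> m" for i
  proof -
    have "i \<le> m - 1" using that by simp
    then show ?thesis using that
    proof (induction i rule: inc_induct)
      case base
      have m1: "Suc (m - 1) = m" using base by simp
      have n2: "2 \<le> n" using mN by simp
      have hL: "G (m - 1) (Suc m) = F m * F (m - 1) - Q * F (m - 1) * F m"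
        using Gs[of "m - 1" m] G1[of "m - 1"] base m1 by (simp add: qf_le)
      have hR: "G m (Suc (Suc m)) = F (Suc m) * F m - Qi * F m * F (Suc m)"
        using Gs[of m "Suc m"] G1[of m] by (simp add: qf_gt)
      have hO: "G (m - 1) (Suc (Suc m)) = F (Suc m) * G (m - 1) (Suc m) - Qi * G (m - 1) (Suc m) * F (Suc m)"
        using Gs[of "m - 1" "Suc m"] base by (simp add: qf_gt)
      have hyp: "G (m - 1) (Suc (Suc m)) * F m + F m * G (m - 1) (Suc (Suc m)) = 0"
        using Fss base n2 by (simp add: numeral_2_eq_2)
      have xz: "F (m - 1) * F (Suc m) = F (Suc m) * F (m - 1)" using base mN by (intro Ffar) auto
      have "G (m - 1) (Suc m) * G m (Suc (Suc m)) + G m (Suc (Suc m)) * G (m - 1) (Suc m)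
         = (Qi - Q) * G (m - 1) (Suc (Suc m)) * F m"
        by (rule CB0[OF Fsq xz hL hR hO hyp])
      then show ?case using m1 G1[of m] by simp
    next
      case (step i)
      note st = step
      have hO: "G i (Suc m) = G (Suc i) (Suc m) * F i - Q * F i * G (Suc i) (Suc m)"
        using Lrec[of i "Suc m"] st mN by (simp add: qf_le)
      have hD: "G (Suc i) (Suc (Suc m)) = G (Suc (Suc i)) (Suc (Suc m)) * F (Suc i) - Q * F (Suc i) * G (Suc (Suc i)) (Suc (Suc m))"
        using Lrec[of "Suc i" "Suc (Suc m)"] st mN by (simp add: qf_le)
      have hP: "G i (Suc (Suc m)) = G (Suc i) (Suc (Suc m)) * F i - Q * F i * G (Suc i) (Suc (Suc m))"
        using Lrec[of i "Suc (Suc m)"] st mN by (simp add: qf_le)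
      have hE: "G (Suc i) (Suc m) = G (Suc (Suc i)) (Suc m) * F (Suc i) - Q * F (Suc i) * G (Suc (Suc i)) (Suc m)"
        using Lrec[of "Suc i" "Suc m"] st mN by (simp add: qf_le)
      have wO: "F (Suc i) * G i (Suc m) = G i (Suc m) * F (Suc i)" using st mN by (intro IC) auto
      have wP: "F (Suc i) * G i (Suc (Suc m)) = G i (Suc (Suc m)) * F (Suc i)" using st mN by (intro IC) auto
      have xB: "F i * G (Suc (Suc i)) (Suc (Suc m)) = G (Suc (Suc i)) (Suc (Suc m)) * F i" using st mN by (intro far) auto
      have xE: "F i * G (Suc (Suc i)) (Suc m) = G (Suc (Suc i)) (Suc m) * F i" using st mN by (intro far) auto
      have IH: "G (Suc i) (Suc m) * G (Suc (Suc i)) (Suc (Suc m)) + G (Suc (Suc i)) (Suc (Suc m)) * G (Suc i) (Suc m)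
          = (Qi - Q) * G (Suc i) (Suc (Suc m)) * G (Suc (Suc i)) (Suc m)" using st by auto
      show ?case by (rule CBL[OF hO hD hP hE wO wP xB xE IH])
    qed
  qed
  have "Suc m \<le> k" using assms by simp
  then show ?thesis using assms
  proof (induction k rule: dec_induct)
    case base
    then show ?case using b0 by auto
  next
    case (step k)
    note st = step
    have hA: "G (Suc i) (Suc k) = F k * G (Suc i) k - Qi * G (Suc i) k * F k"
      using Gs[of "Suc i" k] st by (simp add: qf_gt)
    have hO0: "G i (Suc k) = F k * G i k - Qi * G i k * F k"
      using Gs[of i k] st by (simp add: qf_gt)
    have hA': "G (Suc i) (Suc (Suc k)) = F (Suc k) * G (Suc i) (Suc k) - Qi * G (Suc i) (Suc k) * F (Suc k)"
      using Gs[of "Suc i" "Suc k"] st by (simp add: qf_gt)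
    have hO: "G i (Suc (Suc k)) = F (Suc k) * G i (Suc k) - Qi * G i (Suc k) * F (Suc k)"
      using Gs[of i "Suc k"] st by (simp add: qf_gt)
    have zL: "F (Suc k) * G i k = G i k * F (Suc k)" using st by (intro far) auto
    have za: "F (Suc k) * G (Suc i) k = G (Suc i) k * F (Suc k)" using st by (intro far) auto
    have yA: "F k * G (Suc i) (Suc (Suc k)) = G (Suc i) (Suc (Suc k)) * F k" using st by (intro IC) auto
    have yO: "F k * G i (Suc (Suc k)) = G i (Suc (Suc k)) * F k" using st by (intro IC) auto
    have IH: "G i k * G (Suc i) (Suc k) + G (Suc i) (Suc k) * G i k = (Qi - Q) * G i (Suc k) * G (Suc i) k"
      using st by auto
    show ?case by (rule CBR[OF hA hO0 hA' hO zL za yA yO IH])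
  qed
qed

lemma NB:
  assumes "1 \<le> i" "Suc i \<le> m" "m < k" "Suc k \<le> N"
  shows "G (Suc i) k * G i (Suc k) + G i (Suc k) * G (Suc i) k = 0"
proof -
  have hA': "G (Suc i) (Suc k) = F k * G (Suc i) k - Qi * G (Suc i) k * F k"
    using Gs[of "Suc i" k] assms by (simp add: qf_gt)
  have hO: "G i (Suc k) = F k * G i k - Qi * G i k * F k"
    using Gs[of i k] assms by (simp add: qf_gt)
  have AO: "G (Suc i) k * G i k = (- Q) * (G i k * G (Suc i) k)" using assms by (intro N2) auto
  show ?thesis by (rule NB0[OF hA' hO AO CB[OF assms]])
qed

lemma N4:
  assumes "1 \<le> s" "s < i" "i \<le> m" "m < k" "k < t" "t \<le> N"
  shows "G i k * G s t = (- 1) * (G s t * G i k)"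
proof -
  have P1: "G i k * G (i - 1) t = (- 1) * (G (i - 1) t * G i k)" if "Suc k \<le> t" "t \<le> N" for t
    using that
  proof (induction t rule: dec_induct)
    case base
    have "G (Suc (i - 1)) k * G (i - 1) (Suc k) + G (i - 1) (Suc k) * G (Suc (i - 1)) k = 0"
      using assms base by (intro NB) auto
    then show ?case using assms by (simp add: eq_neg_iff_add_eq_0)
  next
    case (step t)
    have e: "G (i - 1) (Suc t) = F t * G (i - 1) t - Qi * G (i - 1) t * F t"
      using Gs[of "i - 1" t] step assms by (simp add: qf_gt)
    have "F t * G i k = G i k * F t" using step assms by (intro far) auto
    then have gf: "G i k * F t = F t * G i k" by simp
    have ih: "G i k * G (i - 1) t = (- 1) * (G (i - 1) t * G i k)" using step by auto
    show ?case unfolding e by (rule qstep1[OF gf ih m1_central Qi_central])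
  qed
  have "s \<le> i - 1" using assms by simp
  then show ?thesis using assms
  proof (induction s rule: inc_induct)
    case base
    then show ?case using P1 by auto
  next
    case (step s)
    have e: "G s t = G (Suc s) t * F s - Q * F s * G (Suc s) t"
      using Lrec[of s t] step by (simp add: qf_le)
    have "F s * G i k = G i k * F s" using step by (intro far) auto
    then have gf: "G i k * F s = F s * G i k" by simp
    have ih: "G i k * G (Suc s) t = (- 1) * (G (Suc s) t * G i k)" using step by auto
    show ?case unfolding e by (rule qstep2[OF gf ih m1_central Q_central])
  qed
qed

lemma N5s1:
  assumes fg: "f * g = g * f" and fK: "f * Kk = Kk * f"
    and hH: "H' = f * H - Qi * H * f" and hJ: "J' = f * J - Qi * J * f"
    and ih: "g * H = (- 1) * (H * g) + (Qi - Q) * J * Kk"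
  shows "g * H' = (- 1) * (H' * g) + (Qi - Q) * J' * Kk"
proof -
  have ih': "g * H = (Qi - Q) * (J * Kk) - H * g" using ih by (simp add: mult.assoc)
  show ?thesis
  unfolding hH hJ
  by (simp add: algebra_simps fg[symmetric] comm2[OF fg[symmetric]] fK[symmetric] comm2[OF fK[symmetric]]
     ih' ass[OF ih']
     cc(1,2,3,4)[of f] cc(1,2,3,4)[of g] cc(1,2,3,4)[of H] cc(1,2,3,4)[of J] cc(1,2,3,4)[of Kk] QQi2)
qed

lemma N5s2:
  assumes fH: "f * H = H * f" and fK: "f * Kk = Kk * f"
    and hg: "g = g' * f - Q * f * g'" and hJ: "J = J' * f - Q * f * J'"
    and ih: "g' * H = (- 1) * (H * g') + (Qi - Q) * J' * Kk"
  shows "g * H = (- 1) * (H * g) + (Qi - Q) * J * Kk"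
proof -
  have ih': "g' * H = (Qi - Q) * (J' * Kk) - H * g'" using ih by (simp add: mult.assoc)
  show ?thesis
  unfolding hg hJ
  by (simp add: algebra_simps fH comm2[OF fH] fK[symmetric] comm2[OF fK[symmetric]]
     ih' ass[OF ih']
     cc(1,2,3,4)[of f] cc(1,2,3,4)[of g'] cc(1,2,3,4)[of H] cc(1,2,3,4)[of J'] cc(1,2,3,4)[of Kk] QQi2)
qed

lemma N5:
  assumes "1 \<le> i" "i < s" "s \<le> m" "m < k" "k < t" "t \<le> N"
  shows "G i k * G s t = (- 1) * (G s t * G i k) + (Qi - Q) * G i t * G s k"
proof -
  have P1: "G i k * G (Suc i) t = (- 1) * (G (Suc i) t * G i k) + (Qi - Q) * G i t * G (Suc i) k"
    if "1 \<le> i" "Suc i \<le> m" "Suc k \<le> t" "t \<le> N" for i t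
    using that(3) that
  proof (induction t rule: dec_induct)
    case base
    have "G i k * G (Suc i) (Suc k) + G (Suc i) (Suc k) * G i k = (Qi - Q) * G i (Suc k) * G (Suc i) k"
      using assms base by (intro CB) auto
    then show ?case by (simp add: algebra_simps)
  next
    case (step t)
    have hH: "G (Suc i) (Suc t) = F t * G (Suc i) t - Qi * G (Suc i) t * F t"
      using Gs[of "Suc i" t] step assms by (simp add: qf_gt)
    have hJ: "G i (Suc t) = F t * G i t - Qi * G i t * F t"
      using Gs[of i t] step assms by (simp add: qf_gt)
    have fg: "F t * G i k = G i k * F t" using step assms by (intro far) auto
    have fK: "F t * G (Suc i) k = G (Suc i) k * F t" using step assms by (intro far) auto
    have ih: "G i k * G (Suc i) t = (- 1) * (G (Suc i) t * G i k) + (Qi - Q) * G i t * G (Suc i) k"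
      using step by auto
    show ?case by (rule N5s1[OF fg fK hH hJ ih])
  qed
  have "i \<le> s - 1" using assms by simp
  then show ?thesis using assms
  proof (induction i rule: inc_induct)
    case base
    then show ?case using P1[of "s - 1" t] by auto
  next
    case (step i)
    have hg: "G i k = G (Suc i) k * F i - Q * F i * G (Suc i) k"
      using Lrec[of i k] step by (simp add: qf_le)
    have hJ: "G i t = G (Suc i) t * F i - Q * F i * G (Suc i) t"
      using Lrec[of i t] step by (simp add: qf_le)
    have fH: "F i * G s t = G s t * F i" using step by (intro far) auto
    have fK: "F i * G s k = G s k * F i" using step by (intro far) auto
    have ih: "G (Suc i) k * G s t = (- 1) * (G s t * G (Suc i) k) + (Qi - Q) * G (Suc i) t * G s k"
      using step by auto
    show ?case by (rule N5s2[OF fH fK hg hJ ih])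
  qed
qed

lemma KEY:
  assumes p: "(i, k) \<in> I1 m n" and r: "(s, t) \<in> I1 m n" and pr: "prec (s, t) (i, k)"
  shows "\<exists>y z. G i k * G s t = G s t * y + G i t * z \<and> (t = k \<longrightarrow> z = 0)"
proof -
  from p r have a: "1 \<le> i" "i \<le> m" "m < k" "k \<le> N" "1 \<le> s" "s \<le> m" "m < t" "t \<le> N"
    unfolding I1_def by auto
  from pr have b: "k < t \<or> (t = k \<and> s < i)" unfolding prec_def by auto
  have mc: "(- Q) * (X * Y) = X * ((- Q) * Y)" for X Y by (simp add: cc)
  have m1: "(- 1) * (X * Y) = X * ((- 1) * Y)" for X Y :: 'a by simp
  have c3: "(Qi - Q) * X * Y = X * ((Qi - Q) * Y)" for X Y by (simp add: algebra_simps cc)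
  show ?thesis
  proof (cases "t = k")
    case True
    then have "s < i" using b by simp
    then have "G i k * G s t = G s t * ((- Q) * G i k) + G i t * 0"
      using N2[of s i k] a True mc by simp
    then show ?thesis using True by blast
  next
    case False
    then have kt: "k < t" using b by simp
    consider "s = i" | "s < i" | "i < s" by linarith
    then show ?thesis
    proof cases
      case 1
      then have "G i k * G s t = G s t * ((- Q) * G i k) + G i t * 0"
        using N3[of i k t] a kt mc by simp
      then show ?thesis using False by blast
    next
      case 2
      then have "G i k * G s t = G s t * ((- 1) * G i k) + G i t * 0"
        using N4[of s i k t] a kt m1 by simp
      then show ?thesis using False by blast
    next
      case 3
      then have "G i k * G s t = G s t * ((- 1) * G i k) + G i t * ((Qi - Q) * G s k)"
        using N5[of i s k t] a kt m1 c3 by simp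
      then show ?thesis using False by blast
    qed
  qed
qed

definition Pl :: "(nat \<times> nat) list \<Rightarrow> 'a" where
  "Pl xs = prod_list (map (\<lambda>(a, b). G a b) xs)"

lemma prec_trans: "prec a b \<Longrightarrow> prec b c \<Longrightarrow> prec a c"
  unfolding prec_def by auto
lemma prec_irrefl: "\<not> prec a a"
  unfolding prec_def by auto

lemma MAIN_list:
  assumes "sorted_wrt prec xs" "set xs \<subseteq> I1 m n"
    "\<forall>r\<in>set xs. \<forall>r'\<in>I1 m n. prec r' r \<longrightarrow> r' \<in> set xs"
  shows "\<forall>(s, t)\<in>set xs. Pl xs * G s t = 0"
  using assms
proof (induction xs rule: rev_induct)
  case Nil
  then show ?case by simp
next
  case (snoc p xs)
  obtain i k where pik: "p = (i, k)" by (cases p)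
  have srt: "sorted_wrt prec xs" and lt: "\<forall>r\<in>set xs. prec r p"
    using snoc.prems(1) by (auto simp: sorted_wrt_append)
  have sub: "set xs \<subseteq> I1 m n" using snoc.prems(2) by simp
  have pI: "(i, k) \<in> I1 m n" using snoc.prems(2) pik by simp
  have dc: "\<forall>r\<in>set xs. \<forall>r'\<in>I1 m n. prec r' r \<longrightarrow> r' \<in> set xs"
  proof (intro ballI impI)
    fix r r' assume r: "r \<in> set xs" and r': "r' \<in> I1 m n" and pr: "prec r' r"
    have "r' \<in> set (xs @ [p])" using snoc.prems(3) r r' pr by auto
    moreover have "r' \<noteq> p" using prec_trans[OF pr] lt r prec_irrefl by blast
    ultimately show "r' \<in> set xs" by simp
  qed
  have IH: "\<forall>(s, t)\<in>set xs. Pl xs * G s t = 0" using snoc.IH[OF srt sub dc] .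
  have Pe: "Pl (xs @ [p]) = Pl xs * G i k" unfolding Pl_def pik by simp
  show ?case
  proof (clarify)
    fix s t assume st: "(s, t) \<in> set (xs @ [p])"
    show "Pl (xs @ [p]) * G s t = 0"
    proof (cases "(s, t) = p")
      case True
      then have "s = i" "t = k" using pik by auto
      moreover have "G i k * G i k = 0" using pI unfolding I1_def by (intro N1) auto
      ultimately show ?thesis unfolding Pe by (simp add: mult.assoc)
    next
      case False
      then have sx: "(s, t) \<in> set xs" using st by simp
      then have pr: "prec (s, t) (i, k)" using lt pik by auto
      have sI: "(s, t) \<in> I1 m n" using sx sub by auto
      obtain y z where yz: "G i k * G s t = G s t * y + G i t * z" and tz: "t = k \<longrightarrow> z = 0"
        using KEY[OF pI sI pr] by blast
      have z0: "Pl xs * G i t * z = 0"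
      proof (cases "t = k")
        case True then show ?thesis using tz by simp
      next
        case False
        then have kt: "k < t" using pr unfolding prec_def by auto
        have itI: "(i, t) \<in> I1 m n" using pI sI unfolding I1_def by auto
        have pr2: "prec (i, t) (i, k)" using kt unfolding prec_def by auto
        have "(i, t) \<in> set (xs @ [p])" using snoc.prems(3) pik itI pr2 by auto
        moreover have "(i, t) \<noteq> p" using pik kt by auto
        ultimately have "(i, t) \<in> set xs" by simp
        then have "Pl xs * G i t = 0" using IH by auto
        then show ?thesis by simp
      qed
      have h0: "Pl xs * G s t = 0" using IH sx by auto
      have "Pl xs * G i k * G s t = Pl xs * (G i k * G s t)" by (simp add: mult.assoc)
      also have "\<dots> = Pl xs * G s t * y + Pl xs * G i t * z" unfolding yz by (simp add: distrib_left mult.assoc)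
      also have "\<dots> = 0" using h0 z0 by simp
      finally show ?thesis unfolding Pe .
    qed
  qed
qed
end

lemma (in UQ) F_set_eq:
  assumes "finite S"
  obtains xs where "set xs = S" "sorted_wrt prec xs" "F_set \<iota> m F S = Pl xs"
proof -
  let ?xs = "THE xs. set xs = S \<and> sorted_wrt prec xs"
  have "set ?xs = S \<and> sorted_wrt prec ?xs" using theI'[OF sorted_unique[OF assms]] .
  moreover have "F_set \<iota> m F S = Pl ?xs"
    unfolding F_set_def Pl_def G_def by simp
  ultimately show ?thesis using that by blast
qed

theorem lemma5p3:
  fixes m n :: nat and \<iota> :: "Cq \<Rightarrow> 'a::ring_1"
    and K Kinv E F :: "nat \<Rightarrow> 'a"
  assumes "1 \<le> m" and "1 \<le> n"
    and "uq_relations m n \<iota> K Kinv E F"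
    and "(i, k) \<in> I1 m n"
  shows "(\<forall>s t. (s, t) \<in> I1 m n \<and> preceq (s, t) (i, k) \<longrightarrow> F_le \<iota> m n F (i, k) * Fij \<iota> m F s t = 0) \<and>
         (\<forall>s t. (s, t) \<in> I1 m n \<and> prec (s, t) (i, k) \<longrightarrow> F_lt \<iota> m n F (i, k) * Fij \<iota> m F s t = 0)"
proof -
  have U: "UQ m n \<iota> K Kinv E F" using assms(3) by (rule UQ.intro)
  interpret UQ m n \<iota> K Kinv E F by (rule U)
  have Gf: "Fij \<iota> m F s t = G s t" for s t unfolding G_def by simp
  show ?thesis
  proof (intro conjI allI impI)
    fix s t assume st: "(s, t) \<in> I1 m n \<and> preceq (s, t) (i, k)"
    let ?S = "{r \<in> I1 m n. preceq r (i, k)}"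
    obtain xs where xs: "set xs = ?S" "sorted_wrt prec xs" "F_set \<iota> m F ?S = Pl xs"
      by (rule F_set_eq[OF I1_finite[where P="\<lambda>r. preceq r (i, k)"]])
    have dc: "\<forall>r\<in>set xs. \<forall>r'\<in>I1 m n. prec r' r \<longrightarrow> r' \<in> set xs"
      using xs(1) unfolding preceq_def by (auto intro: prec_trans)
    have "\<forall>(s, t)\<in>set xs. Pl xs * G s t = 0"
      by (rule MAIN_list[OF xs(2) _ dc]) (use xs(1) in auto)
    then show "F_le \<iota> m n F (i, k) * Fij \<iota> m F s t = 0"
      unfolding F_le_def xs(3) Gf using st xs(1) by auto
  next
    fix s t assume st: "(s, t) \<in> I1 m n \<and> prec (s, t) (i, k)"
    let ?S = "{r \<in> I1 m n. prec r (i, k)}"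
    obtain xs where xs: "set xs = ?S" "sorted_wrt prec xs" "F_set \<iota> m F ?S = Pl xs"
      by (rule F_set_eq[OF I1_finite[where P="\<lambda>r. prec r (i, k)"]])
    have dc: "\<forall>r\<in>set xs. \<forall>r'\<in>I1 m n. prec r' r \<longrightarrow> r' \<in> set xs"
      using xs(1) by (auto intro: prec_trans)
    have "\<forall>(s, t)\<in>set xs. Pl xs * G s t = 0"
      by (rule MAIN_list[OF xs(2) _ dc]) (use xs(1) in auto)
    then show "F_lt \<iota> m n F (i, k) * Fij \<iota> m F s t = 0"
      unfolding F_lt_def xs(3) Gf using st xs(1) by auto
  qed
qed

end
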